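(* Let $q$ be a prime power, $1\le s<t$ integers, $\{u_1,\dots,u_t\}$ an $\mathbb{F}_q$-basis of $\mathbb{F}_{q^t}$, $W$ an arbitrary $\mathbb{F}_q$-subspace of $\mathbb{F}_{q^t}$ of dimension $s$, $A\subseteq\mathbb{F}_{q^t}$ and $\alpha^*\in A$. Let $L_W(x)=\prod_{w\in W}(x-w)$ and $g_i(x)=L_W\big(u_i(x-\alpha^* )\big)/(x-\alpha^* )$ for $i=1,\dots,t$. Then for every $\alpha\in A\setminus\{\alpha^*\}$, the set $\{g_1(\alpha),\dots,g_t(\alpha)\}$ has rank at most $t-s$ over $\mathbb{F}_q$. *)

theory Defs
  imports "HOL-Number_Theory.Prime_Powers"
begin

text \<open>A subfield K of an ambient field (the subfield F_q inside F_{q^t}).\<close>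
definition is_subfield :: "'a::field set \<Rightarrow> bool" where
  "is_subfield K \<longleftrightarrow> 0 \<in> K \<and> 1 \<in> K \<and>
     (\<forall>x\<in>K. \<forall>y\<in>K. x + y \<in> K \<and> x * y \<in> K) \<and>
     (\<forall>x\<in>K. - x \<in> K) \<and> (\<forall>x\<in>K. x \<noteq> 0 \<longrightarrow> inverse x \<in> K)"

definition is_Ksubspace :: "'a::field set \<Rightarrow> 'a set \<Rightarrow> bool" where
  "is_Ksubspace K V \<longleftrightarrow> 0 \<in> V \<and> (\<forall>x\<in>V. \<forall>y\<in>V. x + y \<in> V) \<and>
     (\<forall>c\<in>K. \<forall>x\<in>V. c * x \<in> V)"

definition Kspan :: "'a::field set \<Rightarrow> 'a set \<Rightarrow> 'a set" where
  "Kspan K B = {y. \<exists>f. (\<forall>v\<in>B. f v \<in> K) \<and> y = (\<Sum>v\<in>B. f v * v)}"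

definition Kindep :: "'a::field set \<Rightarrow> 'a set \<Rightarrow> bool" where
  "Kindep K B \<longleftrightarrow> finite B \<and> (\<forall>f. (\<forall>v\<in>B. f v \<in> K) \<longrightarrow> (\<Sum>v\<in>B. f v * v) = 0 \<longrightarrow> (\<forall>v\<in>B. f v = 0))"

text \<open>Rank over K of a set of elements: maximal size of a K-independent subset
  (= K-dimension of its K-span; for a subspace, its K-dimension).\<close>
definition Krank :: "'a::field set \<Rightarrow> 'a set \<Rightarrow> nat" where
  "Krank K S = Max (card ` {B. B \<subseteq> S \<and> Kindep K B})"

end

theory Submission imports Defs "HOL-Computational_Algebra.Polynomial" "HOL-Library.FuncSet" begin

lemma Wneg: assumes "is_subfield K" "is_Ksubspace K W" "w \<in> W" shows "- w \<in> W"
proof -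
  have "-1 \<in> K" using assms(1) unfolding is_subfield_def by blast
  hence "(-1) * w \<in> W" using assms(2,3) unfolding is_Ksubspace_def by blast
  thus ?thesis by simp
qed

lemma Wdiff: assumes "is_subfield K" "is_Ksubspace K W" "w \<in> W" "v \<in> W" shows "v - w \<in> W"
  using Wneg[OF assms(1,2,3)] assms(2,4) unfolding is_Ksubspace_def by (metis diff_conv_add_uminus)

lemma W_shift:
  fixes W :: "'a::{field,finite} set"
  assumes "is_subfield K" "is_Ksubspace K W" "w0 \<in> W"
  shows "(\<Prod>w\<in>W. (w0 + y) - w) = (\<Prod>w\<in>W. y - w)"
proof -
  have img: "(\<lambda>v. v + w0) ` W = W"
  proof
    show "(\<lambda>v. v + w0) ` W \<subseteq> W" using assms unfolding is_Ksubspace_def by auto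
    show "W \<subseteq> (\<lambda>v. v + w0) ` W"
    proof
      fix x assume "x \<in> W"
      hence "x - w0 \<in> W" using Wdiff[OF assms(1,2,3)] by blast
      thus "x \<in> (\<lambda>v. v + w0) ` W" by (intro image_eqI[of _ _ "x - w0"]) auto
    qed
  qed
  have "(\<Prod>w\<in>W. (w0 + y) - w) = (\<Prod>w\<in>(\<lambda>v. v + w0) ` W. (w0 + y) - w)" using img by simp
  also have "\<dots> = (\<Prod>v\<in>W. (w0 + y) - (v + w0))"
    by (subst prod.reindex) (auto simp: inj_on_def)
  also have "\<dots> = (\<Prod>w\<in>W. y - w)" by (simp add: algebra_simps)
  finally show ?thesis .
qed

lemma LW_add:
  fixes W :: "'a::{field,finite} set"
  assumes "is_subfield K" "is_Ksubspace K W"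
  shows "(\<Prod>w\<in>W. (x + y) - w) = (\<Prod>w\<in>W. x - w) + (\<Prod>w\<in>W. y - w)"
proof -
  define P where "P = (\<Prod>w\<in>W. [:-w, 1:])"
  define Q where "Q = (\<Prod>w\<in>W. [:y-w, 1:])"
  define c where "c = (\<Prod>w\<in>W. y - w)"
  have fin: "finite W" by simp
  have ne: "card W \<ge> 1" using assms(2) unfolding is_Ksubspace_def
    by (metis One_nat_def Suc_leI card_gt_0_iff empty_iff fin)
  have dP: "degree P = card W" unfolding P_def
    by (subst degree_prod_eq_sum_degree) auto
  have dQ: "degree Q = card W" unfolding Q_def
    by (subst degree_prod_eq_sum_degree) auto
  have lP: "lead_coeff P = 1" unfolding P_def by (subst lead_coeff_prod) auto
  have lQ: "lead_coeff Q = 1" unfolding Q_def by (subst lead_coeff_prod) auto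
  have pP: "poly P z = (\<Prod>w\<in>W. z - w)" for z unfolding P_def by (simp add: poly_prod)
  have pQ: "poly Q z = (\<Prod>w\<in>W. (z + y) - w)" for z unfolding Q_def by (simp add: poly_prod algebra_simps)
  have "Q = P + [:c:]"
  proof (rule poly_eqI_degree_lead_coeff[of _ "card W" _ W])
    show "poly.coeff Q (card W) = poly.coeff (P + [:c:]) (card W)"
      using lP lQ dP dQ ne by (cases "card W") (auto simp: coeff_pCons)
    show "card W \<le> card W" by simp
    show "degree Q \<le> card W" using dQ by simp
    show "degree (P + [:c:]) \<le> card W" using dP
      by (intro degree_add_le) auto
    fix z assume z: "z \<in> W"
    have "poly Q z = c" unfolding pQ c_def using W_shift[OF assms z] by (simp add: add.commute)
    moreover have "poly P z = 0" unfolding pP using z fin by (intro prod_zero) auto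
    ultimately show "poly Q z = poly (P + [:c:]) z" by simp
  qed
  hence "poly Q x = poly P x + c" by simp
  thus ?thesis unfolding pP pQ c_def .
qed

lemma K_pow:
  fixes W :: "'a::{field,finite} set"
  assumes "is_subfield K" "is_Ksubspace K W" "c \<in> K" "c \<noteq> 0"
  shows "c ^ card W = c"
proof -
  have cl: "c * w \<in> W" if "w \<in> W" for w using assms that unfolding is_Ksubspace_def by blast
  have ci: "inverse c \<in> K" using assms unfolding is_subfield_def by blast
  have img: "(\<lambda>w. c * w) ` (W - {0}) = W - {0}"
  proof
    show "(\<lambda>w. c * w) ` (W - {0}) \<subseteq> W - {0}" using cl assms(4) by auto
    show "W - {0} \<subseteq> (\<lambda>w. c * w) ` (W - {0})"
    proof
      fix x assume x: "x \<in> W - {0}"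
      have "inverse c * x \<in> W" using assms(2) ci x unfolding is_Ksubspace_def by blast
      thus "x \<in> (\<lambda>w. c * w) ` (W - {0})" using x assms(4)
        by (intro image_eqI[of _ _ "inverse c * x"]) auto
    qed
  qed
  have "(\<Prod>w\<in>W - {0}. w) = (\<Prod>w\<in>(\<lambda>w. c * w) ` (W - {0}). w)" using img by simp
  also have "\<dots> = (\<Prod>w\<in>W - {0}. c * w)"
    using assms(4) by (subst prod.reindex) (auto simp: inj_on_def)
  also have "\<dots> = c ^ card (W - {0}) * (\<Prod>w\<in>W - {0}. w)"
    by (simp add: prod.distrib)
  finally have eq: "(\<Prod>w\<in>W - {0}. w) = c ^ card (W - {0}) * (\<Prod>w\<in>W - {0}. w)" .
  have nz: "(\<Prod>w\<in>W - {0}. w) \<noteq> 0" by (simp add: prod_zero_iff)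
  have "c ^ card (W - {0}) = 1" using eq nz by simp
  moreover have "card W = Suc (card (W - {0}))"
    using assms(2) unfolding is_Ksubspace_def by (metis card_Suc_Diff1 finite)
  ultimately show ?thesis by simp
qed

lemma LW_hom:
  fixes W :: "'a::{field,finite} set"
  assumes "is_subfield K" "is_Ksubspace K W" "c \<in> K"
  shows "(\<Prod>w\<in>W. c * x - w) = c * (\<Prod>w\<in>W. x - w)"
proof (cases "c = 0")
  case True
  have "0 \<in> W" using assms(2) unfolding is_Ksubspace_def by blast
  hence "(\<Prod>w\<in>W. 0 - w) = (0::'a)" by (intro prod_zero) auto
  thus ?thesis using True by simp
next
  case False
  have cl: "c * w \<in> W" if "w \<in> W" for w using assms that unfolding is_Ksubspace_def by blast
  have ci: "inverse c \<in> K" using assms False unfolding is_subfield_def by blast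
  have img: "(\<lambda>w. c * w) ` W = W"
  proof
    show "(\<lambda>w. c * w) ` W \<subseteq> W" using cl by auto
    show "W \<subseteq> (\<lambda>w. c * w) ` W"
    proof
      fix x assume x: "x \<in> W"
      have "inverse c * x \<in> W" using assms(2) ci x unfolding is_Ksubspace_def by blast
      thus "x \<in> (\<lambda>w. c * w) ` W" using x False
        by (intro image_eqI[of _ _ "inverse c * x"]) auto
    qed
  qed
  have "(\<Prod>w\<in>W. c * x - w) = (\<Prod>w\<in>(\<lambda>w. c * w) ` W. c * x - w)" using img by simp
  also have "\<dots> = (\<Prod>w\<in>W. c * x - c * w)"
    using False by (subst prod.reindex) (auto simp: inj_on_def)
  also have "\<dots> = (\<Prod>w\<in>W. c * (x - w))" by (simp add: algebra_simps)
  also have "\<dots> = c ^ card W * (\<Prod>w\<in>W. x - w)" by (simp add: prod.distrib)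
  also have "c ^ card W = c" using K_pow[OF assms False] .
  finally show ?thesis .
qed

lemma sum_in_V:
  assumes "is_Ksubspace K V" "\<forall>v\<in>B. h v \<in> V" "finite B"
  shows "sum h B \<in> V"
  using assms(3,2) proof (induction B rule: finite_induct)
  case empty then show ?case using assms(1) unfolding is_Ksubspace_def by simp
next
  case (insert x F) then show ?case using assms(1) unfolding is_Ksubspace_def by simp
qed

lemma span_card:
  fixes V :: "'a::{field,finite} set"
  assumes "is_subfield K" "card K = q" "is_Ksubspace K V" "B \<subseteq> V" "Kindep K B"
  shows "q ^ card B \<le> card V"
proof -
  define F where "F = PiE B (\<lambda>_. K)"
  define g where "g f = (\<Sum>v\<in>B. f v * v)" for f
  have finB: "finite B" by simp
  have cF: "card F = q ^ card B" unfolding F_def using assms(2) by (simp add: card_PiE)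
  have inj: "inj_on g F"
  proof (rule inj_onI)
    fix f1 f2 assume f1: "f1 \<in> F" and f2: "f2 \<in> F" and e: "g f1 = g f2"
    have s0: "(\<Sum>v\<in>B. (f1 v - f2 v) * v) = 0" using e unfolding g_def
      by (simp add: left_diff_distrib sum_subtractf)
    have kk: "\<forall>v\<in>B. f1 v - f2 v \<in> K"
    proof
      fix v assume v: "v \<in> B"
      have a: "f1 v \<in> K" "f2 v \<in> K" using f1 f2 v unfolding F_def by auto
      have "- f2 v \<in> K" using a assms(1) unfolding is_subfield_def by blast
      hence "f1 v + - f2 v \<in> K" using a assms(1) unfolding is_subfield_def by blast
      thus "f1 v - f2 v \<in> K" by simp
    qed
    have ind: "\<And>f. (\<forall>v\<in>B. f v \<in> K) \<Longrightarrow> (\<Sum>v\<in>B. f v * v) = 0 \<Longrightarrow> \<forall>v\<in>B. f v = 0"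
      using assms(5) unfolding Kindep_def by blast
    have "\<forall>v\<in>B. f1 v - f2 v = 0" using ind[of "\<lambda>v. f1 v - f2 v"] kk s0 by simp
    show "f1 = f2" using f1 f2 unfolding F_def
    proof (rule PiE_ext)
      fix i assume "i \<in> B" thus "f1 i = f2 i" using \<open>\<forall>v\<in>B. f1 v - f2 v = 0\<close> by simp
    qed
  qed
  have sub: "g ` F \<subseteq> V"
  proof
    fix y assume "y \<in> g ` F"
    then obtain f where f: "f \<in> F" "y = g f" by blast
    have "\<forall>v\<in>B. f v * v \<in> V" using f assms(3,4) unfolding F_def is_Ksubspace_def by blast
    thus "y \<in> V" unfolding f g_def by (rule sum_in_V[OF assms(3) _ finB])
  qed
  have "card F = card (g ` F)" using card_image[OF inj] by simp
  also have "\<dots> \<le> card V" using sub by (intro card_mono) auto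
  finally show ?thesis using cF by simp
qed

theorem lemma8:
  fixes q t s :: nat and K :: "'a::{field,finite} set"
    and u :: "nat \<Rightarrow> 'a" and W A :: "'a set" and \<alpha>star :: 'a
  assumes "primepow q"
    and "card (UNIV :: 'a set) = q ^ t"
    and "is_subfield K" and "card K = q"
    and "1 \<le> s" and "s < t"
    and "inj_on u {1..t}" and "Kindep K (u ` {1..t})" and "Kspan K (u ` {1..t}) = UNIV"
    and "is_Ksubspace K W" and "Krank K W = s"
    and "\<alpha>star \<in> A"
  shows "\<forall>\<alpha>\<in>A - {\<alpha>star}.
           Krank K ((\<lambda>i. (\<Prod>w\<in>W. u i * (\<alpha> - \<alpha>star) - w) / (\<alpha> - \<alpha>star)) ` {1..t}) \<le> t - s"
proof
  fix \<alpha> assume \<alpha>: "\<alpha> \<in> A - {\<alpha>star}"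
  define \<beta> where "\<beta> = \<alpha> - \<alpha>star"
  have b0: "\<beta> \<noteq> 0" using \<alpha> unfolding \<beta>_def by auto
  define L where "L z = (\<Prod>w\<in>W. z - w)" for z
  define \<phi> where "\<phi> x = L (x * \<beta>) / \<beta>" for x
  define V where "V = range \<phi>"
  have q2: "q \<ge> 2" using primepow_gt_Suc_0[OF assms(1)] by simp
  have Ladd: "L (x + y) = L x + L y" for x y unfolding L_def by (rule LW_add[OF assms(3,10)])
  have Lhom: "c \<in> K \<Longrightarrow> L (c * x) = c * L x" for c x unfolding L_def by (rule LW_hom[OF assms(3,10)])
  have L0: "L z = 0 \<longleftrightarrow> z \<in> W" for z unfolding L_def by (simp add: prod_zero_iff)
  have Vsub: "is_Ksubspace K V" unfolding is_Ksubspace_def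
  proof (intro conjI ballI)
    have "0 \<in> W" using assms(10) unfolding is_Ksubspace_def by blast
    hence "\<phi> 0 = 0" unfolding \<phi>_def using L0 by simp
    thus "0 \<in> V" unfolding V_def by (metis rangeI)
  next
    fix x y assume "x \<in> V" "y \<in> V"
    then obtain a b where ab: "x = \<phi> a" "y = \<phi> b" unfolding V_def by blast
    have "\<phi> (a + b) = x + y" unfolding ab \<phi>_def by (simp add: distrib_right Ladd add_divide_distrib)
    thus "x + y \<in> V" unfolding V_def by (metis rangeI)
  next
    fix c x assume c: "c \<in> K" and "x \<in> V"
    then obtain a where a: "x = \<phi> a" unfolding V_def by blast
    have "\<phi> (c * a) = c * x" unfolding a \<phi>_def using Lhom[OF c, of "a * \<beta>"]
      by (simp add: mult.assoc)
    thus "c * x \<in> V" unfolding V_def by (metis rangeI)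
  qed
  have fib: "card (\<phi> -` {\<phi> x0}) = card W" for x0
  proof -
    have "\<phi> -` {\<phi> x0} = (\<lambda>w. x0 + w / \<beta>) ` W"
    proof (rule set_eqI)
      fix x
      have "\<phi> x = \<phi> x0 \<longleftrightarrow> L (x * \<beta>) = L (x0 * \<beta>)" unfolding \<phi>_def using b0 by auto
      also have "L (x * \<beta>) = L ((x - x0) * \<beta>) + L (x0 * \<beta>)"
        by (metis Ladd diff_add_cancel distrib_right)
      finally have "\<phi> x = \<phi> x0 \<longleftrightarrow> (x - x0) * \<beta> \<in> W" using L0 by simp
      also have "\<dots> \<longleftrightarrow> x \<in> (\<lambda>w. x0 + w / \<beta>) ` W"
      proof
        assume "(x - x0) * \<beta> \<in> W"
        thus "x \<in> (\<lambda>w. x0 + w / \<beta>) ` W" using b0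
          by (intro image_eqI[of _ _ "(x - x0) * \<beta>"]) auto
      next
        assume "x \<in> (\<lambda>w. x0 + w / \<beta>) ` W"
        then obtain w where "w \<in> W" "x = x0 + w / \<beta>" by blast
        thus "(x - x0) * \<beta> \<in> W" using b0 by simp
      qed
      finally show "x \<in> \<phi> -` {\<phi> x0} \<longleftrightarrow> x \<in> (\<lambda>w. x0 + w / \<beta>) ` W" by simp
    qed
    moreover have "inj_on (\<lambda>w. x0 + w / \<beta>) W" using b0 by (auto simp: inj_on_def)
    ultimately show ?thesis by (simp add: card_image)
  qed
  have cardV: "card V * card W = q ^ t"
  proof -
    have "(UNIV :: 'a set) = (\<Union>v\<in>V. \<phi> -` {v})" unfolding V_def by auto
    hence "card (UNIV :: 'a set) = card (\<Union>v\<in>V. \<phi> -` {v})" by simp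
    also have "\<dots> = (\<Sum>v\<in>V. card (\<phi> -` {v}))"
      by (rule card_UN_disjoint) auto
    also have "\<dots> = (\<Sum>v\<in>V. card W)" unfolding V_def by (intro sum.cong) (auto simp: fib)
    finally show ?thesis using assms(2) by simp
  qed
  have finS: "finite {B. B \<subseteq> W \<and> Kindep K B}" by (rule finite)
  have neS: "{} \<in> {B. B \<subseteq> W \<and> Kindep K B}" unfolding Kindep_def by simp
  obtain BW where BW: "BW \<subseteq> W" "Kindep K BW" "card BW = s"
    using Max_in[of "card ` {B. B \<subseteq> W \<and> Kindep K B}"] finS neS assms(11)
    unfolding Krank_def by fastforce
  have qsW: "q ^ s \<le> card W" using span_card[OF assms(3,4,10) BW(1,2)] BW(3) by simp
  define S where "S = (\<lambda>i. (\<Prod>w\<in>W. u i * (\<alpha> - \<alpha>star) - w) / (\<alpha> - \<alpha>star)) ` {1..t}"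
  have SV: "S \<subseteq> V"
  proof
    fix y assume "y \<in> S"
    then obtain i where "y = (\<Prod>w\<in>W. u i * (\<alpha> - \<alpha>star) - w) / (\<alpha> - \<alpha>star)"
      unfolding S_def by blast
    hence "y = \<phi> (u i)" unfolding \<phi>_def L_def \<beta>_def .
    thus "y \<in> V" unfolding V_def by (rule image_eqI) simp
  qed
  have bound: "card B \<le> t - s" if B: "B \<subseteq> S" "Kindep K B" for B
  proof -
    have "q ^ card B \<le> card V" by (rule span_card[OF assms(3,4) Vsub _ B(2)]) (use B(1) SV in blast)
    hence "q ^ card B * q ^ s \<le> card V * card W" by (rule mult_le_mono[OF _ qsW])
    hence "q ^ (card B + s) \<le> q ^ t" by (simp only: power_add cardV)
    hence "card B + s \<le> t" by (rule power_le_imp_le_exp[rotated]) (use q2 in linarith)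
    thus ?thesis by linarith
  qed
  have "Krank K S \<le> t - s" unfolding Krank_def
  proof (rule Max.boundedI)
    show "finite (card ` {B. B \<subseteq> S \<and> Kindep K B})" by (intro finite_imageI) (rule finite)
    have "{} \<in> {B. B \<subseteq> S \<and> Kindep K B}" unfolding Kindep_def by simp
    thus "card ` {B. B \<subseteq> S \<and> Kindep K B} \<noteq> {}" by blast
    fix n assume "n \<in> card ` {B. B \<subseteq> S \<and> Kindep K B}"
    then obtain B where B: "n = card B" "B \<subseteq> S" "Kindep K B" by blast
    show "n \<le> t - s" unfolding B(1) by (rule bound[OF B(2,3)])
  qed
  thus "Krank K ((\<lambda>i. (\<Prod>w\<in>W. u i * (\<alpha> - \<alpha>star) - w) / (\<alpha> - \<alpha>star)) ` {1..t}) \<le> t - s"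
    unfolding S_def .
qed

end
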